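(* Let $(X,\le)$ be a poset and $E$ an equivalence relation on $X$ with ${\le}\subseteq E$. If $\alpha:X\to X$ is an order automorphism of $(X,\le)$ with $\alpha\subseteq E$, then $\alpha\circ({\le}^c)^\smile=({\le}^c)^\smile\circ\alpha$, and this relation belongs to $\mathsf{Up}(\mathbf E)$.
   Context: For binary relations: converse $R^\smile=\{(x,y)\mid(y,x)\in R\}$; composition $R\circ S=\{(x,y)\mid\exists z\,((x,z)\in R,(z,y)\in S)\}$. A function $\alpha$ is identified with its graph $\{(x,\alpha(x))\}$. For a poset $(X,\le)$ and an equivalence relation $E\supseteq{\le}$ on $X$, $E$ is partially ordered by $(u,v)\preceq(x,y)$ iff $x\le u$ and $v\le y$; $\mathbf E=(E,\preceq)$ and $\mathsf{Up}(\mathbf E)$ is its set of up-sets. For $R\subseteq E$, $R^c=E\setminus R$. An order automorphism is a bijection $\alpha$ with $x\le y\iff\alpha(x)\le\alpha(y)$. *)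

theory Defs
  imports Main
begin

definition graph_on :: "'a set \<Rightarrow> ('a \<Rightarrow> 'a) \<Rightarrow> 'a rel" where
  "graph_on X f = {(x, f x) | x. x \<in> X}"

definition order_automorphism :: "'a set \<Rightarrow> 'a rel \<Rightarrow> ('a \<Rightarrow> 'a) \<Rightarrow> bool" where
  "order_automorphism X le f \<longleftrightarrow> bij_betw f X X \<and>
     (\<forall>x\<in>X. \<forall>y\<in>X. (x, y) \<in> le \<longleftrightarrow> (f x, f y) \<in> le)"

definition E_ord :: "'a rel \<Rightarrow> ('a \<times> 'a) \<Rightarrow> ('a \<times> 'a) \<Rightarrow> bool" where
  "E_ord le p q \<longleftrightarrow> (fst q, fst p) \<in> le \<and> (snd p, snd q) \<in> le"

definition Up :: "'a rel \<Rightarrow> 'a rel \<Rightarrow> 'a rel set" where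
  "Up le E = {U. U \<subseteq> E \<and> (\<forall>p\<in>U. \<forall>q\<in>E. E_ord le p q \<longrightarrow> q \<in> U)}"

end

theory Submission
  imports Defs
begin

lemma graph_on_mem: "(x, y) \<in> graph_on X f \<longleftrightarrow> x \<in> X \<and> y = f x"
  by (auto simp: graph_on_def)

theorem lemma3p9:
  fixes X :: "'a set" and le E :: "'a rel" and \<alpha> :: "'a \<Rightarrow> 'a"
  assumes "le \<subseteq> X \<times> X" and "partial_order_on X le"
    and "equiv X E" and "le \<subseteq> E"
    and "order_automorphism X le \<alpha>" and "graph_on X \<alpha> \<subseteq> E"
  shows "graph_on X \<alpha> O (E - le)\<inverse> = (E - le)\<inverse> O graph_on X \<alpha> \<and>
           graph_on X \<alpha> O (E - le)\<inverse> \<in> Up le E"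
proof -
  have EX: "E \<subseteq> X \<times> X" using assms(3) by (auto simp: equiv_def refl_on_def)
  have sym: "\<And>x y. (x,y) \<in> E \<Longrightarrow> (y,x) \<in> E" using assms(3) by (auto simp: equiv_def sym_def)
  have tr: "\<And>x y z. (x,y) \<in> E \<Longrightarrow> (y,z) \<in> E \<Longrightarrow> (x,z) \<in> E"
    using assms(3) by (auto simp: equiv_def elim: transE)
  have trl: "\<And>x y z. (x,y) \<in> le \<Longrightarrow> (y,z) \<in> le \<Longrightarrow> (x,z) \<in> le"
    using assms(2) by (auto simp: partial_order_on_def preorder_on_def elim: transE)
  have bij: "bij_betw \<alpha> X X" and ord: "\<And>x y. x \<in> X \<Longrightarrow> y \<in> X \<Longrightarrow> (x, y) \<in> le \<longleftrightarrow> (\<alpha> x, \<alpha> y) \<in> le"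
    using assms(5) by (auto simp: order_automorphism_def)
  have aX: "\<And>x. x \<in> X \<Longrightarrow> \<alpha> x \<in> X" using bij by (meson bij_betwE)
  have aE: "\<And>x. x \<in> X \<Longrightarrow> (x, \<alpha> x) \<in> E" using assms(6) by (auto simp: graph_on_def)
  have L: "graph_on X \<alpha> O (E - le)\<inverse> = {(x,y). x \<in> X \<and> (\<alpha> x, y) \<in> E \<and> (y, \<alpha> x) \<notin> le}"
    using sym by (auto simp: graph_on_mem)
  have eq: "graph_on X \<alpha> O (E - le)\<inverse> = (E - le)\<inverse> O graph_on X \<alpha>"
  proof (rule set_eqI, clarify)
    fix x y
    show "(x,y) \<in> graph_on X \<alpha> O (E - le)\<inverse> \<longleftrightarrow> (x,y) \<in> (E - le)\<inverse> O graph_on X \<alpha>"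
    proof
      assume "(x,y) \<in> graph_on X \<alpha> O (E - le)\<inverse>"
      hence x: "x \<in> X" and e: "(\<alpha> x, y) \<in> E" and n: "(y, \<alpha> x) \<notin> le" using L by auto
      have y: "y \<in> X" using e EX by auto
      obtain z where z: "z \<in> X" "y = \<alpha> z" using bij y by (metis bij_betw_iff_bijections)
      have "(x, z) \<in> E" using tr[OF tr[OF aE[OF x] e]] sym[OF aE[OF z(1)]] z by simp
      moreover have "(z, x) \<notin> le" using ord[OF z(1) x] n z by simp
      ultimately show "(x,y) \<in> (E - le)\<inverse> O graph_on X \<alpha>" using z by (auto simp: graph_on_mem intro: sym)
    next
      assume "(x,y) \<in> (E - le)\<inverse> O graph_on X \<alpha>"
      then obtain z where z: "z \<in> X" "y = \<alpha> z" and e: "(z, x) \<in> E" and n: "(z, x) \<notin> le"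
        by (auto simp: graph_on_mem)
      have x: "x \<in> X" using e EX by auto
      have "(\<alpha> x, y) \<in> E" using tr[OF tr[OF sym[OF aE[OF x]] sym[OF e]]] aE[OF z(1)] z by simp
      moreover have "(y, \<alpha> x) \<notin> le" using ord[OF z(1) x] n z by simp
      ultimately show "(x,y) \<in> graph_on X \<alpha> O (E - le)\<inverse>" using L x by auto
    qed
  qed
  have up: "graph_on X \<alpha> O (E - le)\<inverse> \<in> Up le E"
    unfolding Up_def
  proof (clarify, intro conjI)
    show "graph_on X \<alpha> O (E - le)\<inverse> \<subseteq> E"
    proof
      fix p assume "p \<in> graph_on X \<alpha> O (E - le)\<inverse>"
      then obtain x y where p: "p = (x,y)" "x \<in> X" "(\<alpha> x, y) \<in> E" using L by auto
      thus "p \<in> E" using tr[OF aE] by auto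
    qed
    show "\<forall>p\<in>graph_on X \<alpha> O (E - le)\<inverse>. \<forall>q\<in>E. E_ord le p q \<longrightarrow> q \<in> graph_on X \<alpha> O (E - le)\<inverse>"
    proof (intro ballI impI)
      fix p q assume pin: "p \<in> graph_on X \<alpha> O (E - le)\<inverse>" and q: "q \<in> E" and o: "E_ord le p q"
      obtain u v where p: "p = (u,v)" "u \<in> X" "(\<alpha> u, v) \<in> E" "(v, \<alpha> u) \<notin> le" using pin L by auto
      obtain x y where qq: "q = (x,y)" by force
      have xy: "x \<in> X" "y \<in> X" using q qq EX by auto
      have xu: "(x,u) \<in> le" and vy: "(v,y) \<in> le" using o p qq by (auto simp: E_ord_def)
      have "(\<alpha> x, y) \<in> E" using tr[OF sym[OF aE[OF xy(1)]]] q qq by auto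
      moreover have "(y, \<alpha> x) \<notin> le"
      proof
        assume "(y, \<alpha> x) \<in> le"
        moreover have "(\<alpha> x, \<alpha> u) \<in> le" using ord[OF xy(1) p(2)] xu by simp
        ultimately show False using trl vy p(4) by blast
      qed
      ultimately show "q \<in> graph_on X \<alpha> O (E - le)\<inverse>" using L qq xy by auto
    qed
  qed
  show ?thesis using eq up by simp
qed

end
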